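(* Fix $r_0,u_0,\Lambda>0$ and $(\mathring g,\mathring\lambda_g,\mathring e_g)\in D$. There exist $\varepsilon>0$ and a constant $C>0$ depending only on $r_0,u_0,\mathring g,\Lambda$ (and not on $\mathring f$) such that for every $(\mathring f,\mathring\lambda_f,\mathring e_f)\in D$ with $d:=\|\mathring f-\mathring g\|_{L^\infty}<\varepsilon$: $$\|\mathring\lambda_f\|_{L^\infty}\le C,\qquad \|\mathring e_f\|_{L^\infty}\le C,$$ and each of the quantities $$\|e^{\mathring\lambda_f}-e^{\mathring\lambda_g}\|_{L^\infty},\ \|e^{\mathring\lambda_f}\mathring e_f-e^{\mathring\lambda_g}\mathring e_g\|_{L^\infty},\ \|\mathring e_f-\mathring e_g\|_{L^\infty},\ \|\mathring\lambda_f-\mathring\lambda_g\|_{L^\infty},\ \|e^{2\mathring\lambda_f}\mathring e_f^2-e^{2\mathring\lambda_g}\mathring e_g^2\|_{L^\infty},\ \|e^{2\mathring\lambda_f}-e^{2\mathring\lambda_g}\|_{L^\infty}$$ is bounded by $Cd$.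
   Context: Units with gravitational constant and speed of light equal to $1$; $q\in\mathbb R$ is a fixed charge parameter. For $x\in\mathbb R^3$ write $r=|x|$. A function $h(x,v)$ on $\mathbb R^6$ is spherically symmetric if $h(Ax,Av)=h(x,v)$ for all $A\in SO(3)$. Constraint equations for initial data: given $\mathring f\ge 0$, functions $\mathring\lambda(r),\mathring\mu(r),\mathring e(r)$ on $[0,\infty)$ with $e^{-2\mathring\lambda}(2r\mathring\lambda'-1)+1=8\pi r^2\mathring\rho$, $e^{-2\mathring\lambda}(2r\mathring\mu'-1)+1=8\pi r^2\mathring p$, $\partial_r(r^2e^{\mathring\lambda}\mathring e)=qr^2e^{\mathring\lambda}\mathring M$, where $\mathring\rho=\int_{\mathbb R^3}\mathring f\sqrt{1+|v|^2}\,dv+\tfrac12 e^{2\mathring\lambda}\mathring e^2$, $\mathring p=\int_{\mathbb R^3}(\tfrac{x\cdot v}{r})^2\mathring f\,\tfrac{dv}{\sqrt{1+|v|^2}}-\tfrac12 e^{2\mathring\lambda}\mathring e^2$, $\mathring M=\int_{\mathbb R^3}\mathring f\,dv$; a regular solution of the constraints additionally has $\mathring\lambda\ge0$, $\mathring\mu\le0$, these functions $C^1$, and $\lim_{r\to\infty}\mathring\lambda=\lim_{r\to\infty}\mathring\mu=\mathring\lambda(0)=\lim_{r\to\infty}\mathring e=\mathring e(0)=0$. For $r_0,u_0,\Lambda>0$, $D$ is the set of triples $(\mathring f,\mathring\lambda,\mathring e)$ with $\mathring f\in C^\infty(\mathbb R^6)$ nonnegative, spherically symmetric, $\operatorname{supp}\mathring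 f\subset B(r_0)\times B(u_0)$, satisfying $8\pi\int_0^r s^2\int_{\mathbb R^3}\mathring f(s,v)\sqrt{1+|v|^2}\,dv\,ds<r$ for all $r>0$, and such that $(\mathring\lambda,\mathring e)$ (with the corresponding $\mathring\mu$) is a regular solution of the constraint equations with $\|\mathring\lambda\|_{L^\infty}\le\Lambda$. *)

theory Defs
  imports "HOL-Analysis.Analysis"
begin

type_synonym vec3 = "real ^ 3"

coinductive smooth_fun :: "('a::euclidean_space \<Rightarrow> real) \<Rightarrow> bool" where
  "F differentiable_on UNIV \<Longrightarrow>
   (\<forall>b\<in>Basis. smooth_fun (\<lambda>p. frechet_derivative F (at p) b)) \<Longrightarrow> smooth_fun F"

definition SO3 :: "(real^3^3) set" where
  "SO3 = {A. orthogonal_matrix A \<and> det A = 1}"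

definition spherically_symmetric :: "(vec3 \<Rightarrow> vec3 \<Rightarrow> real) \<Rightarrow> bool" where
  "spherically_symmetric h \<longleftrightarrow> (\<forall>A\<in>SO3. \<forall>x v. h (A *v x) (A *v v) = h x v)"

text \<open>A point of R^3 with modulus r (r \<ge> 0); radial quantities are evaluated there.\<close>
definition radpt :: "real \<Rightarrow> vec3" where
  "radpt r = r *\<^sub>R axis 1 1"

definition rho_kin :: "(vec3 \<Rightarrow> vec3 \<Rightarrow> real) \<Rightarrow> real \<Rightarrow> real" where
  "rho_kin f r = (LINT v|lborel. f (radpt r) v * sqrt (1 + (norm v)\<^sup>2))"

definition rho0 :: "(vec3 \<Rightarrow> vec3 \<Rightarrow> real) \<Rightarrow> (real \<Rightarrow> real) \<Rightarrow> (real \<Rightarrow> real) \<Rightarrow> real \<Rightarrow> real" where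
  "rho0 f lam e r = rho_kin f r + (1/2) * exp (2 * lam r) * (e r)\<^sup>2"

text \<open>For x = radpt r with r > 0 one has (x \<bullet> v)/r = v \$ 1.\<close>
definition p0 :: "(vec3 \<Rightarrow> vec3 \<Rightarrow> real) \<Rightarrow> (real \<Rightarrow> real) \<Rightarrow> (real \<Rightarrow> real) \<Rightarrow> real \<Rightarrow> real" where
  "p0 f lam e r = (LINT v|lborel. (v $ 1)\<^sup>2 * f (radpt r) v / sqrt (1 + (norm v)\<^sup>2))
                  - (1/2) * exp (2 * lam r) * (e r)\<^sup>2"

definition M0 :: "(vec3 \<Rightarrow> vec3 \<Rightarrow> real) \<Rightarrow> real \<Rightarrow> real" where
  "M0 f r = (LINT v|lborel. f (radpt r) v)"

definition C1_half :: "(real \<Rightarrow> real) \<Rightarrow> bool" where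
  "C1_half h \<longleftrightarrow> (\<exists>h'. continuous_on {0..} h' \<and>
      (\<forall>r\<ge>0. (h has_real_derivative h' r) (at r within {0..})))"

definition regular_solution ::
  "real \<Rightarrow> (vec3 \<Rightarrow> vec3 \<Rightarrow> real) \<Rightarrow> (real \<Rightarrow> real) \<Rightarrow> (real \<Rightarrow> real) \<Rightarrow> (real \<Rightarrow> real) \<Rightarrow> bool" where
  "regular_solution q f lam mu e \<longleftrightarrow>
     C1_half lam \<and> C1_half mu \<and> C1_half e \<and>
     (\<forall>r\<ge>0. \<exists>lam' mu'.
        (lam has_real_derivative lam') (at r within {0..}) \<and>
        (mu has_real_derivative mu') (at r within {0..}) \<and>
        exp (-2 * lam r) * (2 * r * lam' - 1) + 1 = 8 * pi * r\<^sup>2 * rho0 f lam e r \<and>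
        exp (-2 * lam r) * (2 * r * mu' - 1) + 1 = 8 * pi * r\<^sup>2 * p0 f lam e r \<and>
        ((\<lambda>s. s\<^sup>2 * exp (lam s) * e s) has_real_derivative
            q * r\<^sup>2 * exp (lam r) * M0 f r) (at r within {0..})) \<and>
     (\<forall>r\<ge>0. lam r \<ge> 0 \<and> mu r \<le> 0) \<and>
     (lam \<longlongrightarrow> 0) at_top \<and> (mu \<longlongrightarrow> 0) at_top \<and> (e \<longlongrightarrow> 0) at_top \<and>
     lam 0 = 0 \<and> e 0 = 0"

definition D :: "real \<Rightarrow> real \<Rightarrow> real \<Rightarrow> real \<Rightarrow>
    ((vec3 \<Rightarrow> vec3 \<Rightarrow> real) \<times> (real \<Rightarrow> real) \<times> (real \<Rightarrow> real)) set" where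
  "D q r0 u0 Lam = {(f, lam, e).
     smooth_fun (\<lambda>p::vec3 \<times> vec3. f (fst p) (snd p)) \<and>
     (\<forall>x v. f x v \<ge> 0) \<and>
     spherically_symmetric f \<and>
     closure {p. f (fst p) (snd p) \<noteq> 0} \<subseteq> ball 0 r0 \<times> ball 0 u0 \<and>
     (\<forall>r>0. 8 * pi * (LBINT s=0..r. s\<^sup>2 * rho_kin f s) < r) \<and>
     (\<exists>mu. regular_solution q f lam mu e) \<and>
     (\<forall>r\<ge>0. \<bar>lam r\<bar> \<le> Lam)}"

definition sup_dist :: "(vec3 \<Rightarrow> vec3 \<Rightarrow> real) \<Rightarrow> (vec3 \<Rightarrow> vec3 \<Rightarrow> real) \<Rightarrow> real" where
  "sup_dist f g = (SUP p\<in>UNIV. \<bar>f (fst p) (snd p) - g (fst p) (snd p)\<bar>)"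

end

theory Submission
  imports Defs
begin

lemma deriv_mono_le:
  fixes h h' :: "real \<Rightarrow> real"
  assumes "0 \<le> a" "a \<le> b"
    and D: "\<And>x. a \<le> x \<Longrightarrow> x \<le> b \<Longrightarrow> (h has_real_derivative h' x) (at x within {0..})"
    and N: "\<And>x. a < x \<Longrightarrow> x < b \<Longrightarrow> h' x \<le> 0"
  shows "h b \<le> h a"
proof (rule DERIV_nonpos_imp_decreasing_open[OF \<open>a \<le> b\<close>])
  fix x assume x: "a < x" "x < b"
  have "x \<in> interior {0::real..}" using x assms(1) by simp
  hence "at x within {0..} = at x" by (rule at_within_interior)
  with D[of x] x have "(h has_real_derivative h' x) (at x)" by simp
  with N[OF x] show "\<exists>y. DERIV h x :> y \<and> y \<le> 0" by blast
next
  show "continuous_on {a..b} h"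
  proof (clarsimp simp: continuous_on_eq_continuous_within)
    fix x assume x: "a \<le> x" "x \<le> b"
    have "continuous (at x within {0..}) h"
      using D[OF x] by (rule DERIV_continuous)
    thus "continuous (at x within {a..b}) h"
      by (rule continuous_within_subset) (use assms(1) in auto)
  qed
qed

lemma deriv_bound:
  fixes h h' k k' :: "real \<Rightarrow> real"
  assumes "0 \<le> a" "a \<le> b"
    and Dh: "\<And>x. a \<le> x \<Longrightarrow> x \<le> b \<Longrightarrow> (h has_real_derivative h' x) (at x within {0..})"
    and Dk: "\<And>x. a \<le> x \<Longrightarrow> x \<le> b \<Longrightarrow> (k has_real_derivative k' x) (at x within {0..})"
    and N: "\<And>x. a < x \<Longrightarrow> x < b \<Longrightarrow> \<bar>h' x\<bar> \<le> k' x"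
  shows "\<bar>h b - h a\<bar> \<le> k b - k a"
proof -
  have 1: "(\<lambda>x. h x - k x) b \<le> (\<lambda>x. h x - k x) a"
    apply (rule deriv_mono_le[OF assms(1,2), where h'="\<lambda>x. h' x - k' x"])
     apply (intro DERIV_diff Dh Dk; assumption)
    using N by (smt (verit))
  have 2: "(\<lambda>x. - h x - k x) b \<le> (\<lambda>x. - h x - k x) a"
    apply (rule deriv_mono_le[OF assms(1,2), where h'="\<lambda>x. - h' x - k' x"])
     apply (intro DERIV_diff DERIV_minus Dh Dk; assumption)
    using N by (smt (verit))
  show ?thesis using 1 2 by simp
qed

lemma int_bound:
  fixes h w :: "vec3 \<Rightarrow> real"
  assumes ch: "continuous_on UNIV h" and cw: "continuous_on UNIV w"
    and z: "\<And>v. norm v \<ge> R \<Longrightarrow> h v = 0"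
    and hb: "\<And>v. \<bar>h v\<bar> \<le> B"
    and wb: "\<And>v. norm v \<le> R \<Longrightarrow> \<bar>w v\<bar> \<le> W"
  shows "integrable lborel (\<lambda>v. h v * w v)"
    and "\<bar>LINT v|lborel. h v * w v\<bar> \<le> B * W * measure lborel (cball (0::vec3) R)"
proof -
  have eq: "(\<lambda>v. h v * w v) = (\<lambda>v. indicator (cball 0 R) v *\<^sub>R (h v * w v))"
    using z by (auto simp: indicator_def fun_eq_iff)
  have ci: "continuous_on (cball 0 R) (\<lambda>v. h v * w v)"
    by (intro continuous_intros continuous_on_subset[OF ch] continuous_on_subset[OF cw]) auto
  show int: "integrable lborel (\<lambda>v. h v * w v)"
    by (subst eq, rule borel_integrable_compact[OF compact_cball ci])
  have fin: "emeasure lborel (cball (0::vec3) R) < \<infinity>"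
    by (rule emeasure_compact_finite[OF compact_cball])
  have intI: "integrable lborel (\<lambda>v. indicator (cball (0::vec3) R) v * (B * W))"
    using fin by (simp add: integrable_real_mult_indicator)
  have "\<bar>LINT v|lborel. h v * w v\<bar> \<le> (LINT v|lborel. \<bar>h v * w v\<bar>)"
    using integral_abs_bound by blast
  also have "\<dots> \<le> (LINT v|lborel. indicator (cball (0::vec3) R) v * (B * W))"
  proof (rule integral_mono[OF integrable_abs[OF int] intI])
    fix v :: vec3
    show "\<bar>h v * w v\<bar> \<le> indicator (cball 0 R) v * (B * W)"
    proof (cases "norm v \<le> R")
      case True
      have "\<bar>h v * w v\<bar> = \<bar>h v\<bar> * \<bar>w v\<bar>" by (simp add: abs_mult)
      also have "\<dots> \<le> B * W" using hb wb[OF True]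
        by (intro mult_mono) (auto intro: order_trans[OF abs_ge_zero])
      finally show ?thesis using True by (simp add: indicator_def)
    next
      case False thus ?thesis using z[of v] by (simp add: indicator_def)
    qed
  qed
  also have "\<dots> = B * W * measure lborel (cball (0::vec3) R)"
    using fin by (simp add: measure_def)
  finally show "\<bar>LINT v|lborel. h v * w v\<bar> \<le> B * W * measure lborel (cball (0::vec3) R)" .
qed

definition Efun :: "(real \<Rightarrow> real) \<Rightarrow> (real \<Rightarrow> real) \<Rightarrow> real \<Rightarrow> real" where
  "Efun lam e s = s\<^sup>2 * exp (lam s) * e s"

definition Afun :: "(real \<Rightarrow> real) \<Rightarrow> real \<Rightarrow> real" where
  "Afun lam s = s * (1 - exp (-2 * lam s))"

lemma norm_radpt[simp]: "norm (radpt r) = \<bar>r\<bar>"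
  by (simp add: radpt_def)

locale sol =
  fixes q r0 u0 Lam :: real and f :: "vec3 \<Rightarrow> vec3 \<Rightarrow> real" and lam e :: "real \<Rightarrow> real"
  assumes inD: "(f, lam, e) \<in> D q r0 u0 Lam"
begin

lemma unD:
  "smooth_fun (\<lambda>p::vec3 \<times> vec3. f (fst p) (snd p))"
  "closure {p. f (fst p) (snd p) \<noteq> 0} \<subseteq> ball 0 r0 \<times> ball 0 u0"
  "\<exists>mu. regular_solution q f lam mu e"
  "\<And>r. r \<ge> 0 \<Longrightarrow> \<bar>lam r\<bar> \<le> Lam"
  using inD by (auto simp: D_def)

lemma cont: "continuous_on UNIV (\<lambda>p::vec3 \<times> vec3. f (fst p) (snd p))"
proof -
  from unD(1) have "(\<lambda>p::vec3 \<times> vec3. f (fst p) (snd p)) differentiable_on UNIV"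
    by (cases rule: smooth_fun.cases) auto
  thus ?thesis by (rule differentiable_imp_continuous_on)
qed

lemma cont_v: "continuous_on UNIV (f x)"
proof -
  have "continuous_on UNIV ((\<lambda>p::vec3 \<times> vec3. f (fst p) (snd p)) \<circ> (\<lambda>v. (x, v)))"
    by (rule continuous_on_compose) (auto intro!: continuous_intros continuous_on_subset[OF cont])
  thus ?thesis by (simp add: o_def)
qed

lemma supp: assumes "f x v \<noteq> 0" shows "norm x < r0" "norm v < u0"
proof -
  have "(x, v) \<in> closure {p. f (fst p) (snd p) \<noteq> 0}"
    using assms closure_subset by fastforce
  with unD(2) show "norm x < r0" "norm v < u0" by auto
qed

lemma zero_out: "norm x \<ge> r0 \<or> norm v \<ge> u0 \<Longrightarrow> f x v = 0"
  using supp by force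

lemma bounded: "\<exists>B\<ge>0. \<forall>x v. \<bar>f x v\<bar> \<le> B"
proof -
  let ?F = "\<lambda>p::vec3 \<times> vec3. f (fst p) (snd p)"
  let ?K = "cball (0::vec3) r0 \<times> cball (0::vec3) u0"
  have "compact (?F ` ?K)"
    by (intro compact_continuous_image continuous_on_subset[OF cont] compact_Times compact_cball) auto
  hence "bounded (?F ` ?K)" by (rule compact_imp_bounded)
  then obtain B where B: "\<forall>y\<in>?F ` ?K. norm y \<le> B" unfolding bounded_iff by blast
  have "\<bar>f x v\<bar> \<le> max B 0" for x v
  proof (cases "norm x \<le> r0 \<and> norm v \<le> u0")
    case True
    hence "(x, v) \<in> ?K" by auto
    hence "?F (x, v) \<in> ?F ` ?K" by (rule imageI)
    with B have "norm (?F (x, v)) \<le> B" by blast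
    thus ?thesis by simp
  next
    case False
    hence "f x v = 0" by (intro zero_out) auto
    thus ?thesis by simp
  qed
  thus ?thesis by (intro exI[of _ "max B 0"]) auto
qed

lemma lam_bounds: "r \<ge> 0 \<Longrightarrow> 0 \<le> lam r \<and> lam r \<le> Lam"
  using unD(3,4) by (force simp: regular_solution_def)

lemma lam0: "lam 0 = 0" and e0: "e 0 = 0"
  using unD(3) by (auto simp: regular_solution_def)

lemma E_deriv: "r \<ge> 0 \<Longrightarrow>
  (Efun lam e has_real_derivative q * r\<^sup>2 * exp (lam r) * M0 f r) (at r within {0..})"
  using unD(3) unfolding regular_solution_def Efun_def by blast

lemma rho_eq: "8 * pi * r\<^sup>2 * rho0 f lam e r = 8 * pi * r\<^sup>2 * rho_kin f r + 4 * pi * (Efun lam e r)\<^sup>2 / r\<^sup>2"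
proof (cases "r = 0")
  case False
  have x: "exp (2 * lam r) = (exp (lam r))\<^sup>2" by (simp add: power2_eq_square flip: exp_add)
  have h: "(Efun lam e r)\<^sup>2 / r\<^sup>2 = r\<^sup>2 * exp (2 * lam r) * (e r)\<^sup>2"
    using False unfolding x by (simp add: Efun_def power_mult_distrib power2_eq_square)
  have h2: "4 * pi * (Efun lam e r)\<^sup>2 / r\<^sup>2 = 4 * pi * (r\<^sup>2 * exp (2 * lam r) * (e r)\<^sup>2)"
    by (subst times_divide_eq_right[symmetric], subst h, rule refl)
  show ?thesis unfolding h2 by (simp add: rho0_def algebra_simps)
qed (simp add: Efun_def)

lemma A_deriv: assumes "r \<ge> 0" shows
  "(Afun lam has_real_derivative 8 * pi * r\<^sup>2 * rho_kin f r + 4 * pi * (Efun lam e r)\<^sup>2 / r\<^sup>2) (at r within {0..})"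
proof -
  obtain lam' where d: "(lam has_real_derivative lam') (at r within {0..})"
    and eq: "exp (-2 * lam r) * (2 * r * lam' - 1) + 1 = 8 * pi * r\<^sup>2 * rho0 f lam e r"
    using unD(3) assms unfolding regular_solution_def by blast
  have h1: "((\<lambda>s. -2 * lam s) has_real_derivative -2 * lam') (at r within {0..})"
    by (rule DERIV_cmult[OF d])
  have h2: "((\<lambda>s. exp (-2 * lam s)) has_real_derivative exp (-2 * lam r) * (-2 * lam')) (at r within {0..})"
    using DERIV_chain2[OF DERIV_exp h1] .
  have h3: "((\<lambda>s. 1 - exp (-2 * lam s)) has_real_derivative 0 - exp (-2 * lam r) * (-2 * lam')) (at r within {0..})"
    by (rule DERIV_diff[OF DERIV_const h2])
  have "(Afun lam has_real_derivative (1 * (1 - exp (-2 * lam r)) + (0 - exp (-2 * lam r) * (-2 * lam')) * r)) (at r within {0..})"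
    unfolding Afun_def by (rule DERIV_mult[OF DERIV_ident h3])
  moreover have "1 * (1 - exp (-2 * lam r)) + (0 - exp (-2 * lam r) * (-2 * lam')) * r =
      8 * pi * r\<^sup>2 * rho_kin f r + 4 * pi * (Efun lam e r)\<^sup>2 / r\<^sup>2"
  proof -
    have "1 * (1 - exp (-2 * lam r)) + (0 - exp (-2 * lam r) * (-2 * lam')) * r
       = exp (-2 * lam r) * (2 * r * lam' - 1) + 1" by (simp add: algebra_simps)
    thus ?thesis using eq rho_eq[of r] by simp
  qed
  ultimately show ?thesis by simp
qed

lemma M_out: "r \<ge> r0 \<Longrightarrow> M0 f r = 0"
proof -
  assume "r \<ge> r0" hence "\<And>v. f (radpt r) v = 0" by (intro zero_out disjI1) auto
  thus ?thesis by (simp add: M0_def)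
qed
lemma rho_out: "r \<ge> r0 \<Longrightarrow> rho_kin f r = 0"
proof -
  assume "r \<ge> r0" hence "\<And>v. f (radpt r) v = 0" by (intro zero_out disjI1) auto
  thus ?thesis by (simp add: rho_kin_def)
qed

lemma A0: "Afun lam 0 = 0" by (simp add: Afun_def)
lemma Efun0: "Efun lam e 0 = 0" by (simp add: Efun_def)

end

lemma exp_diff_le: fixes x y :: real shows "\<bar>exp x - exp y\<bar> \<le> exp (max x y) * \<bar>x - y\<bar>"
proof -
  have k: "exp b - exp a \<le> exp b * (b - a)" if "a \<le> b" for a b :: real
  proof -
    have "exp (a - b) \<ge> 1 + (a - b)" by (rule exp_ge_add_one_self)
    hence "exp b * exp (a - b) \<ge> exp b * (1 + (a - b))" by (intro mult_left_mono) auto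
    thus ?thesis by (simp add: exp_diff algebra_simps)
  qed
  show ?thesis
  proof (cases "x \<le> y")
    case True thus ?thesis using k[OF True] by (simp add: max_def abs_if)
  next
    case False thus ?thesis using k[of y x] by (simp add: max_def abs_if)
  qed
qed

lemma exp_diff_ge: fixes x y :: real shows "exp (min x y) * \<bar>x - y\<bar> \<le> \<bar>exp x - exp y\<bar>"
proof -
  have k: "exp a * (b - a) \<le> exp b - exp a" if "a \<le> b" for a b :: real
  proof -
    have "exp (b - a) \<ge> 1 + (b - a)" by (rule exp_ge_add_one_self)
    hence "exp a * exp (b - a) \<ge> exp a * (1 + (b - a))" by (intro mult_left_mono) auto
    thus ?thesis by (simp add: exp_diff algebra_simps)
  qed
  show ?thesis
  proof (cases "x \<le> y")
    case True thus ?thesis using k[OF True] by (simp add: min_def abs_if)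
  next
    case False thus ?thesis using k[of y x] by (simp add: min_def abs_if)
  qed
qed

context sol begin

lemma M_props: assumes B: "\<And>x v. \<bar>f x v\<bar> \<le> B"
  shows "integrable lborel (f (radpt r))" "\<bar>M0 f r\<bar> \<le> B * measure lborel (cball (0::vec3) u0)"
    "integrable lborel (\<lambda>v. f (radpt r) v * sqrt (1 + (norm v)\<^sup>2))"
proof -
  have i: "integrable lborel (\<lambda>v. f (radpt r) v * 1)"
    by (rule int_bound(1)[where R=u0 and B=B and W=1 and h="f (radpt r)" and w="\<lambda>_. 1"],
        (intro cont_v continuous_intros zero_out disjI2 B | simp)+)
  have b: "\<bar>LINT v|lborel. f (radpt r) v * 1\<bar> \<le> B * 1 * measure lborel (cball (0::vec3) u0)"
    by (rule int_bound(2)[where R=u0 and B=B and W=1 and h="f (radpt r)" and w="\<lambda>_. 1"],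
        (intro cont_v continuous_intros zero_out disjI2 B | simp)+)
  show "integrable lborel (f (radpt r))" using i by simp
  show "\<bar>M0 f r\<bar> \<le> B * measure lborel (cball (0::vec3) u0)" using b by (simp add: M0_def)
  show "integrable lborel (\<lambda>v. f (radpt r) v * sqrt (1 + (norm v)\<^sup>2))"
    by (rule int_bound(1)[where R=u0 and B=B and W="sqrt (1 + u0\<^sup>2)"])
       (intro cont_v continuous_intros zero_out disjI2 B | simp add: power_mono)+
qed

lemma E_const: assumes "r0 \<le> r" "0 \<le> r0" shows "Efun lam e r = Efun lam e r0"
proof -
  have "\<bar>Efun lam e r - Efun lam e r0\<bar> \<le> (\<lambda>_. 0) r - (\<lambda>_. 0) r0"
  proof (rule deriv_bound[OF assms(2,1), where h'="\<lambda>x. q * x\<^sup>2 * exp (lam x) * M0 f x" and k'="\<lambda>_. 0"])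
    fix x assume "r0 \<le> x" "x \<le> r"
    thus "(Efun lam e has_real_derivative q * x\<^sup>2 * exp (lam x) * M0 f x) (at x within {0..})"
      using assms by (intro E_deriv) auto
  next
    fix x assume "r0 \<le> x" "x \<le> r"
    show "((\<lambda>_. 0::real) has_real_derivative 0) (at x within {0..})" by (rule DERIV_const)
  next
    fix x assume "r0 < x" "x < r"
    thus "\<bar>q * x\<^sup>2 * exp (lam x) * M0 f x\<bar> \<le> 0" by (simp add: M_out)
  qed
  thus ?thesis by simp
qed

lemma E_bound: assumes r0: "r0 > 0" and Mb: "\<And>r. r \<ge> 0 \<Longrightarrow> \<bar>M0 f r\<bar> \<le> Mb" and r: "r \<ge> 0"
  shows "\<bar>Efun lam e r\<bar> \<le> \<bar>q\<bar> * exp Lam * Mb * r0 / 3 * r\<^sup>2"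
proof -
  define cE where "cE = \<bar>q\<bar> * exp Lam * Mb"
  have Mb0: "Mb \<ge> 0" using Mb[of 0] by simp
  have cE0: "cE \<ge> 0" using Mb0 by (simp add: cE_def)
  have sm: "\<bar>Efun lam e s\<bar> \<le> cE * s ^ 3 / 3" if s: "0 \<le> s" "s \<le> r0" for s
  proof -
    have "\<bar>Efun lam e s - Efun lam e 0\<bar> \<le> (\<lambda>x. cE * x ^ 3 / 3) s - (\<lambda>x. cE * x ^ 3 / 3) 0"
    proof (rule deriv_bound[OF order_refl s(1), where h'="\<lambda>x. q * x\<^sup>2 * exp (lam x) * M0 f x" and k'="\<lambda>x. cE * x\<^sup>2"])
      fix x assume "0 \<le> x" "x \<le> s"
      thus "(Efun lam e has_real_derivative q * x\<^sup>2 * exp (lam x) * M0 f x) (at x within {0..})"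
        by (intro E_deriv)
      show "((\<lambda>x. cE * x ^ 3 / 3) has_real_derivative cE * x\<^sup>2) (at x within {0..})"
        by (auto intro!: derivative_eq_intros simp: power2_eq_square)
    next
      fix x assume x: "0 < x" "x < s"
      have "\<bar>q * x\<^sup>2 * exp (lam x) * M0 f x\<bar> = \<bar>q\<bar> * x\<^sup>2 * exp (lam x) * \<bar>M0 f x\<bar>"
        by (simp add: abs_mult)
      also have "\<dots> \<le> \<bar>q\<bar> * x\<^sup>2 * exp Lam * Mb"
        using lam_bounds[of x] Mb[of x] x
        by (intro mult_mono) (auto intro: mult_nonneg_nonneg)
      finally show "\<bar>q * x\<^sup>2 * exp (lam x) * M0 f x\<bar> \<le> cE * x\<^sup>2" by (simp add: cE_def algebra_simps)
    qed
    thus ?thesis by (simp add: Efun0)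
  qed
  show ?thesis
  proof (cases "r \<le> r0")
    case True
    have "cE * r ^ 3 / 3 = cE * r / 3 * r\<^sup>2" by (simp add: power2_eq_square power3_eq_cube)
    also have "\<dots> \<le> cE * r0 / 3 * r\<^sup>2" using True r cE0 by (intro mult_right_mono divide_right_mono mult_left_mono) auto
    finally show ?thesis using sm[OF r True] by (simp add: cE_def)
  next
    case False
    have "\<bar>Efun lam e r\<bar> = \<bar>Efun lam e r0\<bar>" using E_const[of r] False r0 by simp
    also have "\<dots> \<le> cE * r0 ^ 3 / 3" using sm[of r0] r0 by simp
    also have "\<dots> = cE * r0 / 3 * r0\<^sup>2" by (simp add: power2_eq_square power3_eq_cube)
    also have "\<dots> \<le> cE * r0 / 3 * r\<^sup>2" using False r0 cE0
      by (intro mult_left_mono power_mono) auto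
    finally show ?thesis by (simp add: cE_def)
  qed
qed

end

lemma gron_arith:
  fixes a b A' B' c1 c2 c3 c4 d :: real
  assumes c: "c1 \<ge> 0" "c2 \<ge> 0" "c3 \<ge> 0" "c4 \<ge> 0" "d \<ge> 0"
    and A: "\<bar>A'\<bar> \<le> c1 * d + c2 * \<bar>b\<bar>" and B: "\<bar>B'\<bar> \<le> c3 * d + c4 * \<bar>a\<bar>"
  shows "2 * a * A' + 2 * b * B' \<le> (c1 + c2 + c3 + c4) * (d * d + a * a + b * b)"
proof -
  have s1: "2 * \<bar>a\<bar> * d \<le> d * d + a * a" using sum_squares_bound[of "\<bar>a\<bar>" d] by (simp add: abs_mult_self power2_eq_square add.commute)
  have s2: "2 * \<bar>a\<bar> * \<bar>b\<bar> \<le> a * a + b * b" using sum_squares_bound[of "\<bar>a\<bar>" "\<bar>b\<bar>"] by (simp add: abs_mult_self power2_eq_square add.commute)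
  have s3: "2 * \<bar>b\<bar> * d \<le> d * d + b * b" using sum_squares_bound[of "\<bar>b\<bar>" d] by (simp add: abs_mult_self power2_eq_square add.commute)
  have "2 * a * A' \<le> 2 * \<bar>a\<bar> * \<bar>A'\<bar>" by (simp add: abs_mult[symmetric] abs_le_iff)
  also have "\<dots> \<le> 2 * \<bar>a\<bar> * (c1 * d + c2 * \<bar>b\<bar>)" using A by (intro mult_left_mono) auto
  also have "\<dots> = c1 * (2 * \<bar>a\<bar> * d) + c2 * (2 * \<bar>a\<bar> * \<bar>b\<bar>)" by (simp add: algebra_simps)
  also have "\<dots> \<le> c1 * (d * d + a * a) + c2 * (a * a + b * b)"
    using s1 s2 c by (intro add_mono mult_left_mono) auto
  finally have 1: "2 * a * A' \<le> c1 * (d * d + a * a) + c2 * (a * a + b * b)" .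
  have "2 * b * B' \<le> 2 * \<bar>b\<bar> * \<bar>B'\<bar>" by (simp add: abs_mult[symmetric] abs_le_iff)
  also have "\<dots> \<le> 2 * \<bar>b\<bar> * (c3 * d + c4 * \<bar>a\<bar>)" using B by (intro mult_left_mono) auto
  also have "\<dots> = c3 * (2 * \<bar>b\<bar> * d) + c4 * (2 * \<bar>a\<bar> * \<bar>b\<bar>)" by (simp add: algebra_simps)
  also have "\<dots> \<le> c3 * (d * d + b * b) + c4 * (a * a + b * b)"
    using s3 s2 c by (intro add_mono mult_left_mono) auto
  finally have 2: "2 * b * B' \<le> c3 * (d * d + b * b) + c4 * (a * a + b * b)" .
  have aa: "a * a \<ge> 0" "b * b \<ge> 0" "d * d \<ge> 0" by auto
  have "c1 * (d * d + a * a) + c2 * (a * a + b * b) + (c3 * (d * d + b * b) + c4 * (a * a + b * b))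
     \<le> (c1 + c2 + c3 + c4) * (d * d + a * a + b * b)"
  proof -
    have nn: "0 \<le> c1*(b*b) + c2*(d*d) + c3*(a*a) + c4*(d*d)"
    proof -
      have "0 \<le> c1*(b*b)" "0 \<le> c2*(d*d)" "0 \<le> c3*(a*a)" "0 \<le> c4*(d*d)"
        using c by (auto intro!: mult_nonneg_nonneg)
      thus ?thesis by linarith
    qed
    have eq: "(c1 + c2 + c3 + c4) * (d * d + a * a + b * b) = c1 * (d * d + a * a) + c2 * (a * a + b * b) + (c3 * (d * d + b * b) + c4 * (a * a + b * b))
       + (c1*(b*b) + c2*(d*d) + c3*(a*a) + c4*(d*d))" by (simp add: algebra_simps)
    show ?thesis using nn unfolding eq by linarith
  qed
  thus ?thesis using 1 2 by linarith
qed

locale gsol = G: sol q r0 u0 Lam g lg eg for q r0 u0 Lam g lg eg +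
  fixes Bg :: real
  assumes r0: "r0 > 0" and u0: "u0 > 0" and Lam: "Lam > 0" and Bg: "\<And>x v. \<bar>g x v\<bar> \<le> Bg"
begin

definition "Vol = measure lborel (cball (0::vec3) u0)"
definition "Wt = sqrt (1 + u0\<^sup>2)"
definition "Mb = (Bg + 1) * Vol"
definition "BE = \<bar>q\<bar> * exp Lam * Mb * r0 / 3"
definition "kap = exp (2 * Lam)"
definition "c1 = 8 * pi * r0\<^sup>2 * Wt * Vol"
definition "c2 = 8 * pi * BE"
definition "c3 = \<bar>q\<bar> * r0\<^sup>2 * exp Lam * Vol"
definition "c4 = \<bar>q\<bar> * Mb * exp Lam * kap * r0 / 2"
definition "KK = c1 + c2 + c3 + c4"
definition "Ka = exp (KK * r0 / 2)"
definition "Ka1 = c1 + c2 * Ka"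
definition "c5 = 8 * pi * BE * r0\<^sup>2 * Ka"
definition "Ku = Ka1 + (Ka + c5 / r0) / r0"
definition "Kl = kap / 2 * Ku"
definition "c6 = \<bar>q\<bar> * exp Lam * (Vol + Mb * Kl)"
definition "Kb = c6 * r0 / 3"
definition "CC = Lam + BE + exp Lam * Kl + Kb + BE * Kl + Kl + 2 * BE * Kb + 2 * kap * Kl + 1"

lemma Bg0: "Bg \<ge> 0" using Bg[of 0 0] by simp
lemma Vol0: "Vol \<ge> 0" by (simp add: Vol_def)
lemma Wt0: "Wt \<ge> 0" by (simp add: Wt_def)
lemma Mb0: "Mb \<ge> 0" using Bg0 Vol0 by (simp add: Mb_def)
lemma BE0: "BE \<ge> 0" using Mb0 r0 by (simp add: BE_def)
lemma kap0: "kap \<ge> 0" by (simp add: kap_def)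
lemma c10: "c1 \<ge> 0" using r0 Wt0 Vol0 by (simp add: c1_def)
lemma c20: "c2 \<ge> 0" using BE0 by (simp add: c2_def)
lemma c30: "c3 \<ge> 0" using Vol0 by (simp add: c3_def)
lemma c40: "c4 \<ge> 0" using Mb0 kap0 r0 by (simp add: c4_def)
lemma KK0: "KK \<ge> 0" using c10 c20 c30 c40 by (simp add: KK_def)
lemma Ka0: "Ka \<ge> 0" by (simp add: Ka_def)
lemma Ka10: "Ka1 \<ge> 0" using c10 c20 Ka0 by (simp add: Ka1_def)
lemma c50: "c5 \<ge> 0" using BE0 Ka0 by (simp add: c5_def)
lemma Ku0: "Ku \<ge> 0" using Ka10 Ka0 c50 r0 by (simp add: Ku_def)
lemma Kl0: "Kl \<ge> 0" using kap0 Ku0 by (simp add: Kl_def)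
lemma c60: "c6 \<ge> 0" using Vol0 Mb0 Kl0 by (simp add: c6_def)
lemma Kb0: "Kb \<ge> 0" using c60 r0 by (simp add: Kb_def)

end

locale pair = gsol q r0 u0 Lam g lg eg Bg + F: sol q r0 u0 Lam f lf ef
  for q r0 u0 Lam g lg eg Bg f lf ef +
  fixes d :: real
  assumes dist: "\<And>x v. \<bar>f x v - g x v\<bar> \<le> d" and d1: "d \<le> 1"
begin

lemma d0: "d \<ge> 0" using dist[of 0 0] by simp

lemma Bf: "\<bar>f x v\<bar> \<le> Bg + 1"
  using dist[of x v] Bg[of x v] d1 by linarith

lemma Mf: "\<bar>M0 f r\<bar> \<le> Mb"
  using F.M_props(2)[OF Bf] by (simp add: Mb_def Vol_def)

lemma Mg: "\<bar>M0 g r\<bar> \<le> Mb"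
proof -
  have "\<bar>M0 g r\<bar> \<le> Bg * Vol" using G.M_props(2)[OF Bg] by (simp add: Vol_def)
  also have "\<dots> \<le> Mb" unfolding Mb_def using Vol0 by (intro mult_right_mono) auto
  finally show ?thesis .
qed

lemma Ef_bd: "r \<ge> 0 \<Longrightarrow> \<bar>Efun lf ef r\<bar> \<le> BE * r\<^sup>2"
  using F.E_bound[OF r0, of Mb r] Mf by (simp add: BE_def)
lemma Eg_bd: "r \<ge> 0 \<Longrightarrow> \<bar>Efun lg eg r\<bar> \<le> BE * r\<^sup>2"
  using G.E_bound[OF r0, of Mb r] Mg by (simp add: BE_def)

lemma dM: "\<bar>M0 f r - M0 g r\<bar> \<le> d * Vol"
proof -
  have "M0 f r - M0 g r = (LINT v|lborel. (f (radpt r) v - g (radpt r) v) * 1)"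
    unfolding M0_def using F.M_props(1)[OF Bf] G.M_props(1)[OF Bg]
    by (simp add: integral_diff)
  also have "\<bar>\<dots>\<bar> \<le> d * 1 * measure lborel (cball (0::vec3) u0)"
    by (rule int_bound(2)[where R=u0 and B=d and W=1])
       (intro F.cont_v G.cont_v continuous_intros | simp add: F.zero_out G.zero_out dist)+
  finally show ?thesis by (simp add: Vol_def)
qed

lemma drho: "\<bar>rho_kin f r - rho_kin g r\<bar> \<le> d * Wt * Vol"
proof -
  have "rho_kin f r - rho_kin g r = (LINT v|lborel. (f (radpt r) v - g (radpt r) v) * sqrt (1 + (norm v)\<^sup>2))"
    unfolding rho_kin_def using F.M_props(3)[OF Bf] G.M_props(3)[OF Bg]
    by (simp add: integral_diff[symmetric] left_diff_distrib)
  also have "\<bar>\<dots>\<bar> \<le> d * Wt * measure lborel (cball (0::vec3) u0)"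
    unfolding Wt_def
    by (rule int_bound(2)[where R=u0 and B=d])
       (intro F.cont_v G.cont_v continuous_intros | simp add: F.zero_out G.zero_out dist power_mono)+
  finally show ?thesis by (simp add: Vol_def)
qed

lemma lam_b: "r \<ge> 0 \<Longrightarrow> 0 \<le> lf r \<and> lf r \<le> Lam \<and> 0 \<le> lg r \<and> lg r \<le> Lam"
  using F.lam_bounds G.lam_bounds by blast

definition "a r = Afun lf r - Afun lg r"
definition "b r = Efun lf ef r - Efun lg eg r"
definition "a' r = 8 * pi * r\<^sup>2 * (rho_kin f r - rho_kin g r) + 4 * pi * ((Efun lf ef r)\<^sup>2 - (Efun lg eg r)\<^sup>2) / r\<^sup>2"
definition "b' r = q * r\<^sup>2 * (exp (lf r) * M0 f r - exp (lg r) * M0 g r)"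

lemma a_deriv: "r \<ge> 0 \<Longrightarrow> (a has_real_derivative a' r) (at r within {0..})"
  unfolding a_def[abs_def] a'_def
  by (rule DERIV_cong[OF DERIV_diff[OF F.A_deriv G.A_deriv]]) (auto simp: algebra_simps diff_divide_distrib)

lemma b_deriv: "r \<ge> 0 \<Longrightarrow> (b has_real_derivative b' r) (at r within {0..})"
  unfolding b_def[abs_def] b'_def
  by (rule DERIV_cong[OF DERIV_diff[OF F.E_deriv G.E_deriv]]) (auto simp: algebra_simps)

lemma a0: "a 0 = 0" by (simp add: a_def Afun_def)
lemma b0: "b 0 = 0" by (simp add: b_def Efun_def)

lemma a_u: "a r = r * (exp (-2 * lg r) - exp (-2 * lf r))"
  by (simp add: a_def Afun_def algebra_simps)

lemma dlam_u: assumes "r \<ge> 0" shows "\<bar>lf r - lg r\<bar> \<le> kap / 2 * \<bar>exp (-2 * lf r) - exp (-2 * lg r)\<bar>"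
proof -
  have m: "min (-2 * lf r) (-2 * lg r) \<ge> -2 * Lam" using lam_b[OF assms] by auto
  have "exp (-2 * Lam) * (2 * \<bar>lf r - lg r\<bar>) \<le> exp (min (-2 * lf r) (-2 * lg r)) * \<bar>-2 * lf r - -2 * lg r\<bar>"
    using m by (intro mult_mono) (auto simp: abs_if)
  also have "\<dots> \<le> \<bar>exp (-2 * lf r) - exp (-2 * lg r)\<bar>" by (rule exp_diff_ge)
  finally have "exp (-2 * Lam) * (2 * \<bar>lf r - lg r\<bar>) \<le> \<bar>exp (-2 * lf r) - exp (-2 * lg r)\<bar>" .
  hence "kap * (exp (-2 * Lam) * (2 * \<bar>lf r - lg r\<bar>)) \<le> kap * \<bar>exp (-2 * lf r) - exp (-2 * lg r)\<bar>"
    using kap0 by (intro mult_left_mono) auto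
  moreover have "kap * exp (-2 * Lam) = 1" by (simp add: kap_def flip: exp_add)
  hence "kap * (exp (-2 * Lam) * (2 * \<bar>lf r - lg r\<bar>)) = 2 * \<bar>lf r - lg r\<bar>"
    by (metis mult.assoc mult_1)
  ultimately have "2 * \<bar>lf r - lg r\<bar> \<le> kap * \<bar>exp (-2 * lf r) - exp (-2 * lg r)\<bar>" by linarith
  thus ?thesis by simp
qed

lemma dexp: assumes "r \<ge> 0" shows "\<bar>exp (lf r) - exp (lg r)\<bar> \<le> exp Lam * \<bar>lf r - lg r\<bar>"
proof -
  have "\<bar>exp (lf r) - exp (lg r)\<bar> \<le> exp (max (lf r) (lg r)) * \<bar>lf r - lg r\<bar>" by (rule exp_diff_le)
  also have "\<dots> \<le> exp Lam * \<bar>lf r - lg r\<bar>" using lam_b[OF assms] by (intro mult_right_mono) auto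
  finally show ?thesis .
qed

end

context pair begin

lemma a'_bd1: assumes x: "0 < x" "x \<le> r0" shows "\<bar>a' x\<bar> \<le> c1 * d + c2 * \<bar>b x\<bar>"
proof -
  have t1: "\<bar>8 * pi * x\<^sup>2 * (rho_kin f x - rho_kin g x)\<bar> \<le> c1 * d"
  proof -
    have "\<bar>8 * pi * x\<^sup>2 * (rho_kin f x - rho_kin g x)\<bar> = 8 * pi * x\<^sup>2 * \<bar>rho_kin f x - rho_kin g x\<bar>"
      by (simp add: abs_mult)
    also have "\<dots> \<le> 8 * pi * r0\<^sup>2 * (d * Wt * Vol)"
      using x drho[of x] by (intro mult_mono power_mono) auto
    finally show ?thesis by (simp add: c1_def algebra_simps)
  qed
  have e: "(Efun lf ef x)\<^sup>2 - (Efun lg eg x)\<^sup>2 = (Efun lf ef x + Efun lg eg x) * b x"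
    by (simp add: b_def power2_eq_square algebra_simps)
  have s: "\<bar>Efun lf ef x + Efun lg eg x\<bar> \<le> 2 * BE * x\<^sup>2"
    using Ef_bd[of x] Eg_bd[of x] x by simp
  have t2: "\<bar>4 * pi * ((Efun lf ef x)\<^sup>2 - (Efun lg eg x)\<^sup>2) / x\<^sup>2\<bar> \<le> c2 * \<bar>b x\<bar>"
  proof -
    have "\<bar>4 * pi * ((Efun lf ef x)\<^sup>2 - (Efun lg eg x)\<^sup>2) / x\<^sup>2\<bar>
        = 4 * pi * (\<bar>Efun lf ef x + Efun lg eg x\<bar> * \<bar>b x\<bar>) / x\<^sup>2"
      unfolding e by (simp add: abs_mult)
    also have "\<dots> \<le> 4 * pi * (2 * BE * x\<^sup>2 * \<bar>b x\<bar>) / x\<^sup>2"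
      using s by (intro divide_right_mono mult_left_mono mult_right_mono) auto
    also have "\<dots> = c2 * \<bar>b x\<bar>" using x by (simp add: c2_def)
    finally show ?thesis .
  qed
  have "\<bar>a' x\<bar> \<le> \<bar>8 * pi * x\<^sup>2 * (rho_kin f x - rho_kin g x)\<bar> + \<bar>4 * pi * ((Efun lf ef x)\<^sup>2 - (Efun lg eg x)\<^sup>2) / x\<^sup>2\<bar>"
    unfolding a'_def by (rule abs_triangle_ineq)
  thus ?thesis using t1 t2 by linarith
qed

lemma b'_bd1: assumes x: "0 < x" "x \<le> r0" shows "\<bar>b' x\<bar> \<le> c3 * d + c4 * \<bar>a x\<bar>"
proof -
  define U where "U = \<bar>exp (-2 * lf x) - exp (-2 * lg x)\<bar>"
  have aU: "\<bar>a x\<bar> = x * U" using x by (simp add: a_u U_def abs_mult abs_minus_commute)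
  have dl: "\<bar>exp (lf x) - exp (lg x)\<bar> \<le> exp Lam * (kap / 2 * U)"
  proof -
    have "\<bar>exp (lf x) - exp (lg x)\<bar> \<le> exp Lam * \<bar>lf x - lg x\<bar>" using dexp[of x] x by simp
    also have "\<dots> \<le> exp Lam * (kap / 2 * U)" unfolding U_def
      using dlam_u[of x] x by (intro mult_left_mono) auto
    finally show ?thesis .
  qed
  have split: "exp (lf x) * M0 f x - exp (lg x) * M0 g x
      = exp (lf x) * (M0 f x - M0 g x) + (exp (lf x) - exp (lg x)) * M0 g x"
    by (simp add: algebra_simps)
  have "\<bar>exp (lf x) * M0 f x - exp (lg x) * M0 g x\<bar>
      \<le> exp (lf x) * \<bar>M0 f x - M0 g x\<bar> + \<bar>exp (lf x) - exp (lg x)\<bar> * \<bar>M0 g x\<bar>"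
  proof -
    have "\<bar>exp (lf x) * (M0 f x - M0 g x) + (exp (lf x) - exp (lg x)) * M0 g x\<bar>
       \<le> \<bar>exp (lf x) * (M0 f x - M0 g x)\<bar> + \<bar>(exp (lf x) - exp (lg x)) * M0 g x\<bar>"
      by (rule abs_triangle_ineq)
    also have "\<dots> = exp (lf x) * \<bar>M0 f x - M0 g x\<bar> + \<bar>exp (lf x) - exp (lg x)\<bar> * \<bar>M0 g x\<bar>"
      by (simp add: abs_mult)
    finally show ?thesis unfolding split .
  qed
  also have "\<dots> \<le> exp Lam * (d * Vol) + exp Lam * (kap / 2 * U) * Mb"
  proof (rule add_mono)
    show "exp (lf x) * \<bar>M0 f x - M0 g x\<bar> \<le> exp Lam * (d * Vol)"
      using lam_b[of x] x dM[of x] by (intro mult_mono) auto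
    show "\<bar>exp (lf x) - exp (lg x)\<bar> * \<bar>M0 g x\<bar> \<le> exp Lam * (kap / 2 * U) * Mb"
      using dl Mg[of x] kap0 by (intro mult_mono) (auto simp: U_def)
  qed
  finally have m: "\<bar>exp (lf x) * M0 f x - exp (lg x) * M0 g x\<bar> \<le> exp Lam * (d * Vol) + exp Lam * (kap / 2 * U) * Mb" .
  have "\<bar>b' x\<bar> = \<bar>q\<bar> * x\<^sup>2 * \<bar>exp (lf x) * M0 f x - exp (lg x) * M0 g x\<bar>"
    by (simp add: b'_def abs_mult)
  also have "\<dots> \<le> \<bar>q\<bar> * x\<^sup>2 * (exp Lam * (d * Vol) + exp Lam * (kap / 2 * U) * Mb)"
    using m by (intro mult_left_mono) auto
  also have "\<dots> = \<bar>q\<bar> * x\<^sup>2 * exp Lam * Vol * d + \<bar>q\<bar> * Mb * exp Lam * kap / 2 * x * (x * U)"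
    by (simp add: algebra_simps power2_eq_square)
  also have "\<dots> \<le> \<bar>q\<bar> * r0\<^sup>2 * exp Lam * Vol * d + \<bar>q\<bar> * Mb * exp Lam * kap / 2 * r0 * (x * U)"
  proof (rule add_mono)
    have "x\<^sup>2 \<le> r0\<^sup>2" using x by (intro power_mono) auto
    thus "\<bar>q\<bar> * x\<^sup>2 * exp Lam * Vol * d \<le> \<bar>q\<bar> * r0\<^sup>2 * exp Lam * Vol * d"
      using Vol0 d0 by (intro mult_right_mono mult_left_mono) auto
    have "0 \<le> \<bar>q\<bar> * Mb * exp Lam * kap / 2" using Mb0 kap0 by simp
    moreover have "0 \<le> x * U" using x by (simp add: U_def)
    ultimately show "\<bar>q\<bar> * Mb * exp Lam * kap / 2 * x * (x * U) \<le> \<bar>q\<bar> * Mb * exp Lam * kap / 2 * r0 * (x * U)"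
      using x by (intro mult_right_mono mult_left_mono) auto
  qed
  also have "\<dots> = c3 * d + c4 * \<bar>a x\<bar>" unfolding aU by (simp add: c3_def c4_def)
  finally show ?thesis .
qed

lemma V_step: assumes r: "0 \<le> r" "r \<le> r0" shows "\<bar>a r\<bar> \<le> Ka * d \<and> \<bar>b r\<bar> \<le> Ka * d"
proof -
  define V where "V x = d * d + a x * a x + b x * b x" for x
  define V' where "V' x = (0 + (a' x * a x + a' x * a x)) + (b' x * b x + b' x * b x)" for x
  have dV: "(V has_real_derivative V' x) (at x within {0..})" if "x \<ge> 0" for x
    unfolding V_def[abs_def] V'_def
    by (intro DERIV_add DERIV_mult DERIV_const a_deriv b_deriv that)
  have dE: "((\<lambda>x. exp (-KK * x)) has_real_derivative exp (-KK * x) * (-KK * 1)) (at x within {0..})" for x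
    using DERIV_chain2[OF DERIV_exp DERIV_cmult[OF DERIV_ident]] .
  have mono: "(\<lambda>x. exp (-KK * x) * V x) r \<le> (\<lambda>x. exp (-KK * x) * V x) 0"
  proof (rule deriv_mono_le[OF order_refl r(1)])
    fix x assume "0 \<le> x" "x \<le> r"
    thus "((\<lambda>x. exp (-KK * x) * V x) has_real_derivative
      (exp (-KK * x) * (-KK * 1) * V x + V' x * exp (-KK * x))) (at x within {0..})"
      by (intro DERIV_mult dE dV)
  next
    fix x assume x: "0 < x" "x < r"
    have "V' x = 2 * a x * a' x + 2 * b x * b' x" by (simp add: V'_def algebra_simps)
    also have "\<dots> \<le> (c1 + c2 + c3 + c4) * (d * d + a x * a x + b x * b x)"
      by (rule gron_arith[OF c10 c20 c30 c40 d0 a'_bd1 b'_bd1]) (use x r in auto)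
    finally have "V' x \<le> KK * V x" by (simp add: KK_def V_def)
    hence "exp (-KK * x) * (V' x - KK * V x) \<le> 0"
      by (intro mult_nonneg_nonpos) auto
    thus "exp (-KK * x) * (-KK * 1) * V x + V' x * exp (-KK * x) \<le> 0"
      by (simp add: algebra_simps)
  qed
  hence "exp (-KK * r) * V r \<le> d * d" by (simp add: V_def a0 b0)
  hence "V r \<le> d * d * exp (KK * r)"
    by (simp add: exp_minus field_simps)
  also have "\<dots> \<le> d * d * exp (KK * r0)"
    using KK0 r by (intro mult_left_mono) (auto intro: mult_left_mono)
  also have "\<dots> = (Ka * d)\<^sup>2"
    by (simp add: Ka_def power2_eq_square flip: exp_add)
  finally have Vb: "V r \<le> (Ka * d)\<^sup>2" .
  have "(a r)\<^sup>2 \<le> (Ka * d)\<^sup>2" "(b r)\<^sup>2 \<le> (Ka * d)\<^sup>2"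
  proof -
    have "0 \<le> d * d" "0 \<le> a r * a r" "0 \<le> b r * b r" by auto
    thus "(a r)\<^sup>2 \<le> (Ka * d)\<^sup>2" "(b r)\<^sup>2 \<le> (Ka * d)\<^sup>2" using Vb unfolding V_def power2_eq_square by linarith+
  qed
  hence "\<bar>a r\<bar> \<le> \<bar>Ka * d\<bar>" "\<bar>b r\<bar> \<le> \<bar>Ka * d\<bar>" by (simp_all add: abs_le_square_iff)
  thus ?thesis using Ka0 d0 by simp
qed

end

context pair begin

lemma a_lin: assumes r: "0 \<le> r" "r \<le> r0" shows "\<bar>a r\<bar> \<le> Ka1 * d * r"
proof -
  have "\<bar>a r - a 0\<bar> \<le> (\<lambda>x. Ka1 * d * x) r - (\<lambda>x. Ka1 * d * x) 0"
  proof (rule deriv_bound[OF order_refl r(1), where h'=a' and k'="\<lambda>_. Ka1 * d"])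
    fix x assume "0 \<le> x" "x \<le> r"
    thus "(a has_real_derivative a' x) (at x within {0..})" by (intro a_deriv)
    show "((\<lambda>x. Ka1 * d * x) has_real_derivative Ka1 * d) (at x within {0..})"
      using DERIV_cmult[OF DERIV_ident, of "Ka1 * d"] by simp
  next
    fix x assume x: "0 < x" "x < r"
    have "\<bar>a' x\<bar> \<le> c1 * d + c2 * \<bar>b x\<bar>" using x r by (intro a'_bd1) auto
    also have "\<dots> \<le> c1 * d + c2 * (Ka * d)" using V_step[of x] x r c20 by (intro add_left_mono mult_left_mono) auto
    finally show "\<bar>a' x\<bar> \<le> Ka1 * d" by (simp add: Ka1_def algebra_simps)
  qed
  thus ?thesis by (simp add: a0)
qed

lemma a_far: assumes r: "r0 \<le> r" shows "\<bar>a r\<bar> \<le> (Ka + c5 / r0) * d"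
proof -
  define k' where "k' x = - (c5 * d) * - (inverse x ^ Suc (Suc 0))" for x
  have "\<bar>a r - a r0\<bar> \<le> (\<lambda>x. - (c5 * d) * inverse x) r - (\<lambda>x. - (c5 * d) * inverse x) r0"
  proof (rule deriv_bound[OF less_imp_le[OF r0] r, where h'=a' and k'=k'])
    fix x assume x: "r0 \<le> x" "x \<le> r"
    thus "(a has_real_derivative a' x) (at x within {0..})" using r0 by (intro a_deriv) auto
    have "x \<noteq> 0" using x r0 by auto
    thus "((\<lambda>x. - (c5 * d) * inverse x) has_real_derivative k' x) (at x within {0..})"
      unfolding k'_def by (intro DERIV_cmult DERIV_inverse)
  next
    fix x assume x: "r0 < x" "x < r"
    have Ex: "Efun lf ef x = Efun lf ef r0" "Efun lg eg x = Efun lg eg r0"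
      using x r0 by (auto intro: F.E_const G.E_const)
    have ax: "a' x = 4 * pi * ((Efun lf ef r0)\<^sup>2 - (Efun lg eg r0)\<^sup>2) / x\<^sup>2"
      using x by (simp add: a'_def Ex F.rho_out G.rho_out)
    have e: "(Efun lf ef r0)\<^sup>2 - (Efun lg eg r0)\<^sup>2 = (Efun lf ef r0 + Efun lg eg r0) * b r0"
      by (simp add: b_def power2_eq_square algebra_simps)
    have s: "\<bar>Efun lf ef r0 + Efun lg eg r0\<bar> \<le> 2 * BE * r0\<^sup>2"
      using Ef_bd[of r0] Eg_bd[of r0] r0 by simp
    have br: "\<bar>b r0\<bar> \<le> Ka * d" using V_step[of r0] r0 by auto
    have "\<bar>a' x\<bar> = 4 * pi * (\<bar>Efun lf ef r0 + Efun lg eg r0\<bar> * \<bar>b r0\<bar>) / x\<^sup>2"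
      unfolding ax e by (simp add: abs_mult)
    also have "\<dots> \<le> 4 * pi * (2 * BE * r0\<^sup>2 * (Ka * d)) / x\<^sup>2"
      using s br BE0 mult_nonneg_nonneg[OF zero_le_power2[of r0] BE0] by (intro divide_right_mono mult_left_mono mult_mono) auto
    also have "\<dots> = k' x" using x r0 by (simp add: k'_def c5_def power2_eq_square field_simps)
    finally show "\<bar>a' x\<bar> \<le> k' x" .
  qed
  hence "\<bar>a r - a r0\<bar> \<le> c5 * d / r0 - c5 * d / r" by (simp add: divide_inverse)
  also have "\<dots> \<le> c5 * d / r0" using c50 d0 r r0 by simp
  finally have "\<bar>a r - a r0\<bar> \<le> c5 * d / r0" .
  moreover have "\<bar>a r0\<bar> \<le> Ka * d" using V_step[of r0] r0 by auto
  ultimately show ?thesis by (simp add: algebra_simps)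
qed

lemma du: assumes r: "r \<ge> 0" shows "\<bar>exp (-2 * lf r) - exp (-2 * lg r)\<bar> \<le> Ku * d"
proof (cases "r = 0")
  case True thus ?thesis using Ku0 d0 by (simp add: F.lam0 G.lam0)
next
  case False
  hence rp: "r > 0" using r by simp
  define U where "U = \<bar>exp (-2 * lf r) - exp (-2 * lg r)\<bar>"
  have aU: "\<bar>a r\<bar> = r * U" using rp by (simp add: a_u U_def abs_mult abs_minus_commute)
  have Ua: "U = \<bar>a r\<bar> / r" using rp aU by simp
  have K1: "Ka1 * d \<le> Ku * d"
    using Ka10 Ka0 c50 r0 d0 by (auto simp: Ku_def intro!: mult_right_mono)
  have "(Ka + c5 / r0) / r0 \<le> Ku" using Ka10 by (simp add: Ku_def)
  hence "(Ka + c5 / r0) / r0 * d \<le> Ku * d" using d0 by (rule mult_right_mono)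
  hence K2: "(Ka + c5 / r0) * d / r0 \<le> Ku * d" by simp
  show ?thesis
  proof (cases "r \<le> r0")
    case True
    have "U \<le> Ka1 * d" using a_lin[OF r True] rp unfolding Ua by (simp add: field_simps)
    thus ?thesis using K1 U_def by simp
  next
    case False
    have "U \<le> (Ka + c5 / r0) * d / r" using a_far[of r] False rp unfolding Ua
      by (intro divide_right_mono) auto
    also have "\<dots> \<le> (Ka + c5 / r0) * d / r0" using False r0 Ka0 c50 d0
      by (intro divide_left_mono) auto
    finally show ?thesis using K2 U_def by simp
  qed
qed

lemma dlam: assumes r: "r \<ge> 0" shows "\<bar>lf r - lg r\<bar> \<le> Kl * d"
proof -
  have "\<bar>lf r - lg r\<bar> \<le> kap / 2 * \<bar>exp (-2 * lf r) - exp (-2 * lg r)\<bar>" by (rule dlam_u[OF r])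
  also have "\<dots> \<le> kap / 2 * (Ku * d)" using du[OF r] kap0 by (intro mult_left_mono) auto
  finally show ?thesis by (simp add: Kl_def)
qed

lemma dexpl: assumes r: "r \<ge> 0" shows "\<bar>exp (lf r) - exp (lg r)\<bar> \<le> exp Lam * (Kl * d)"
  using dexp[OF r] dlam[OF r] by (meson exp_ge_zero mult_left_mono order_trans)

lemma b_bd: assumes r: "r \<ge> 0" shows "\<bar>b r\<bar> \<le> Kb * d * r\<^sup>2"
proof -
  have sm: "\<bar>b s\<bar> \<le> c6 * d * s ^ 3 / 3" if s: "0 \<le> s" "s \<le> r0" for s
  proof -
    have "\<bar>b s - b 0\<bar> \<le> (\<lambda>x. c6 * d * x ^ 3 / 3) s - (\<lambda>x. c6 * d * x ^ 3 / 3) 0"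
    proof (rule deriv_bound[OF order_refl s(1), where h'=b' and k'="\<lambda>x. c6 * d * x\<^sup>2"])
      fix x assume "0 \<le> x" "x \<le> s"
      thus "(b has_real_derivative b' x) (at x within {0..})" by (intro b_deriv)
      show "((\<lambda>x. c6 * d * x ^ 3 / 3) has_real_derivative c6 * d * x\<^sup>2) (at x within {0..})"
        by (auto intro!: derivative_eq_intros simp: power2_eq_square)
    next
      fix x assume x: "0 < x" "x < s"
      have split: "exp (lf x) * M0 f x - exp (lg x) * M0 g x
          = exp (lf x) * (M0 f x - M0 g x) + (exp (lf x) - exp (lg x)) * M0 g x"
        by (simp add: algebra_simps)
      have "\<bar>exp (lf x) * M0 f x - exp (lg x) * M0 g x\<bar>
          \<le> \<bar>exp (lf x) * (M0 f x - M0 g x)\<bar> + \<bar>(exp (lf x) - exp (lg x)) * M0 g x\<bar>"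
        unfolding split by (rule abs_triangle_ineq)
      also have "\<dots> = exp (lf x) * \<bar>M0 f x - M0 g x\<bar> + \<bar>exp (lf x) - exp (lg x)\<bar> * \<bar>M0 g x\<bar>"
        by (simp add: abs_mult)
      also have "\<dots> \<le> exp Lam * (d * Vol) + exp Lam * (Kl * d) * Mb"
      proof (rule add_mono)
        show "exp (lf x) * \<bar>M0 f x - M0 g x\<bar> \<le> exp Lam * (d * Vol)"
          using lam_b[of x] x dM[of x] by (intro mult_mono) auto
        show "\<bar>exp (lf x) - exp (lg x)\<bar> * \<bar>M0 g x\<bar> \<le> exp Lam * (Kl * d) * Mb"
          using dexpl[of x] x Mg[of x] Kl0 d0 by (intro mult_mono) auto
      qed
      finally have m: "\<bar>exp (lf x) * M0 f x - exp (lg x) * M0 g x\<bar> \<le> exp Lam * (d * Vol) + exp Lam * (Kl * d) * Mb" .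
      have "\<bar>b' x\<bar> = \<bar>q\<bar> * x\<^sup>2 * \<bar>exp (lf x) * M0 f x - exp (lg x) * M0 g x\<bar>"
        by (simp add: b'_def abs_mult)
      also have "\<dots> \<le> \<bar>q\<bar> * x\<^sup>2 * (exp Lam * (d * Vol) + exp Lam * (Kl * d) * Mb)"
        using m by (intro mult_left_mono) auto
      also have "\<dots> = c6 * d * x\<^sup>2" by (simp add: c6_def algebra_simps)
      finally show "\<bar>b' x\<bar> \<le> c6 * d * x\<^sup>2" .
    qed
    thus ?thesis by (simp add: b0)
  qed
  have cd0: "c6 * d \<ge> 0" using c60 d0 by simp
  show ?thesis
  proof (cases "r \<le> r0")
    case True
    have "c6 * d * r ^ 3 / 3 = (c6 * d) * r / 3 * r\<^sup>2" by (simp add: power2_eq_square power3_eq_cube)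
    also have "\<dots> \<le> (c6 * d) * r0 / 3 * r\<^sup>2" using True r cd0
      by (intro mult_right_mono divide_right_mono mult_left_mono) auto
    also have "\<dots> = Kb * d * r\<^sup>2" by (simp add: Kb_def)
    finally show ?thesis using sm[OF r True] by simp
  next
    case False
    have "b r = b r0" using False r0 F.E_const[of r] G.E_const[of r] by (simp add: b_def)
    hence "\<bar>b r\<bar> \<le> c6 * d * r0 ^ 3 / 3" using sm[of r0] r0 by simp
    also have "\<dots> = (c6 * d) * r0 / 3 * r0\<^sup>2" by (simp add: power2_eq_square power3_eq_cube)
    also have "\<dots> \<le> (c6 * d) * r0 / 3 * r\<^sup>2" using False r0 cd0
      by (intro mult_left_mono power_mono) auto
    also have "\<dots> = Kb * d * r\<^sup>2" by (simp add: Kb_def)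
    finally show ?thesis .
  qed
qed

end

context pair begin

lemma X_eq: "r > 0 \<Longrightarrow> exp (lf r) * ef r = Efun lf ef r / r\<^sup>2"
  "r > 0 \<Longrightarrow> exp (lg r) * eg r = Efun lg eg r / r\<^sup>2"
  by (simp_all add: Efun_def)

lemma Xf_bd: assumes "r \<ge> 0" shows "\<bar>exp (lf r) * ef r\<bar> \<le> BE"
proof (cases "r = 0")
  case True thus ?thesis using BE0 by (simp add: F.e0)
next
  case False
  hence rp: "r > 0" using assms by simp
  have "\<bar>Efun lf ef r\<bar> / r\<^sup>2 \<le> BE * r\<^sup>2 / r\<^sup>2" using Ef_bd[OF assms] by (intro divide_right_mono) auto
  thus ?thesis using rp by (simp add: X_eq)
qed

lemma Xg_bd: assumes "r \<ge> 0" shows "\<bar>exp (lg r) * eg r\<bar> \<le> BE"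
proof (cases "r = 0")
  case True thus ?thesis using BE0 by (simp add: G.e0)
next
  case False
  hence rp: "r > 0" using assms by simp
  have "\<bar>Efun lg eg r\<bar> / r\<^sup>2 \<le> BE * r\<^sup>2 / r\<^sup>2" using Eg_bd[OF assms] by (intro divide_right_mono) auto
  thus ?thesis using rp by (simp add: X_eq)
qed

lemma dX: assumes "r \<ge> 0" shows "\<bar>exp (lf r) * ef r - exp (lg r) * eg r\<bar> \<le> Kb * d"
proof (cases "r = 0")
  case True thus ?thesis using Kb0 d0 by (simp add: F.e0 G.e0)
next
  case False
  hence rp: "r > 0" using assms by simp
  have "\<bar>b r\<bar> / r\<^sup>2 \<le> Kb * d * r\<^sup>2 / r\<^sup>2" using b_bd[OF assms] by (intro divide_right_mono) auto
  moreover have "exp (lf r) * ef r - exp (lg r) * eg r = b r / r\<^sup>2"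
    using rp by (simp add: X_eq b_def diff_divide_distrib)
  ultimately show ?thesis using rp by (simp add: abs_divide)
qed

lemma e_rep: "ef r = exp (- lf r) * (exp (lf r) * ef r)" "eg r = exp (- lg r) * (exp (lg r) * eg r)"
  by (simp_all add: mult.assoc[symmetric] flip: exp_add)

lemma ef_bd: assumes "r \<ge> 0" shows "\<bar>ef r\<bar> \<le> BE"
proof -
  have "\<bar>ef r\<bar> = exp (- lf r) * \<bar>exp (lf r) * ef r\<bar>" by (subst e_rep(1)) (simp add: abs_mult)
  also have "\<dots> \<le> 1 * BE" using lam_b[OF assms] Xf_bd[OF assms] by (intro mult_mono) auto
  finally show ?thesis by simp
qed

lemma de: assumes r: "r \<ge> 0" shows "\<bar>ef r - eg r\<bar> \<le> (Kb + BE * Kl) * d"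
proof -
  define Xf where "Xf = exp (lf r) * ef r"
  define Xg where "Xg = exp (lg r) * eg r"
  have eq: "ef r - eg r = exp (- lf r) * (Xf - Xg) + (exp (- lf r) - exp (- lg r)) * Xg"
  proof -
    have e1: "ef r = exp (- lf r) * Xf" and e2: "eg r = exp (- lg r) * Xg"
      unfolding Xf_def Xg_def by (rule e_rep(1), rule e_rep(2))
    show ?thesis by (subst e1, subst e2) (simp add: algebra_simps)
  qed
  have ml: "\<bar>exp (- lf r) - exp (- lg r)\<bar> \<le> Kl * d"
  proof -
    have "\<bar>exp (- lf r) - exp (- lg r)\<bar> \<le> exp (max (- lf r) (- lg r)) * \<bar>- lf r - - lg r\<bar>" by (rule exp_diff_le)
    also have "\<dots> \<le> 1 * \<bar>lf r - lg r\<bar>" using lam_b[OF r] by (intro mult_mono) auto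
    also have "\<dots> \<le> Kl * d" using dlam[OF r] by simp
    finally show ?thesis .
  qed
  have "\<bar>ef r - eg r\<bar> \<le> \<bar>exp (- lf r) * (Xf - Xg)\<bar> + \<bar>(exp (- lf r) - exp (- lg r)) * Xg\<bar>"
    unfolding eq by (rule abs_triangle_ineq)
  also have "\<dots> = exp (- lf r) * \<bar>Xf - Xg\<bar> + \<bar>exp (- lf r) - exp (- lg r)\<bar> * \<bar>Xg\<bar>" by (simp add: abs_mult)
  also have "\<dots> \<le> 1 * (Kb * d) + (Kl * d) * BE"
    using lam_b[OF r] dX[OF r] ml Xg_bd[OF r] Kl0 d0 unfolding Xf_def Xg_def
    by (intro add_mono mult_mono) auto
  finally show ?thesis by (simp add: algebra_simps)
qed

lemma dX2: assumes r: "r \<ge> 0" shows "\<bar>exp (2 * lf r) * (ef r)\<^sup>2 - exp (2 * lg r) * (eg r)\<^sup>2\<bar> \<le> 2 * BE * Kb * d"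
proof -
  define Xf where "Xf = exp (lf r) * ef r"
  define Xg where "Xg = exp (lg r) * eg r"
  have eq: "exp (2 * lf r) * (ef r)\<^sup>2 - exp (2 * lg r) * (eg r)\<^sup>2 = (Xf + Xg) * (Xf - Xg)"
    unfolding Xf_def Xg_def by (simp add: power2_eq_square algebra_simps flip: exp_add)
  have "\<bar>(Xf + Xg) * (Xf - Xg)\<bar> = \<bar>Xf + Xg\<bar> * \<bar>Xf - Xg\<bar>" by (simp add: abs_mult)
  also have "\<dots> \<le> (2 * BE) * (Kb * d)"
    using Xf_bd[OF r] Xg_bd[OF r] dX[OF r] BE0 unfolding Xf_def Xg_def
    by (intro mult_mono) auto
  finally show ?thesis unfolding eq by (simp add: algebra_simps)
qed

lemma dexp2: assumes r: "r \<ge> 0" shows "\<bar>exp (2 * lf r) - exp (2 * lg r)\<bar> \<le> 2 * kap * Kl * d"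
proof -
  have "\<bar>exp (2 * lf r) - exp (2 * lg r)\<bar> \<le> exp (max (2 * lf r) (2 * lg r)) * \<bar>2 * lf r - 2 * lg r\<bar>" by (rule exp_diff_le)
  also have "\<dots> \<le> kap * (2 * (Kl * d))"
    using lam_b[OF r] dlam[OF r] unfolding kap_def by (intro mult_mono) auto
  finally show ?thesis by (simp add: algebra_simps)
qed

lemma CC_ge: "Lam \<le> CC" "BE \<le> CC" "exp Lam * Kl \<le> CC" "Kb \<le> CC" "Kb + BE * Kl \<le> CC" "Kl \<le> CC"
  "2 * BE * Kb \<le> CC" "2 * kap * Kl \<le> CC" "CC > 0"
proof -
  have n: "0 \<le> exp Lam * Kl" "0 \<le> BE * Kl" "0 \<le> BE * Kb" "0 \<le> kap * Kl"
    using Kl0 BE0 Kb0 kap0 by auto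
  show "Lam \<le> CC" "BE \<le> CC" "exp Lam * Kl \<le> CC" "Kb \<le> CC" "Kb + BE * Kl \<le> CC" "Kl \<le> CC"
    "2 * BE * Kb \<le> CC" "2 * kap * Kl \<le> CC" "CC > 0"
    using n Lam BE0 Kb0 Kl0 unfolding CC_def by linarith+
qed

lemma final: assumes r: "r \<ge> 0" shows
  "\<bar>lf r\<bar> \<le> CC \<and> \<bar>ef r\<bar> \<le> CC \<and>
   \<bar>exp (lf r) - exp (lg r)\<bar> \<le> CC * d \<and>
   \<bar>exp (lf r) * ef r - exp (lg r) * eg r\<bar> \<le> CC * d \<and>
   \<bar>ef r - eg r\<bar> \<le> CC * d \<and>
   \<bar>lf r - lg r\<bar> \<le> CC * d \<and>
   \<bar>exp (2 * lf r) * (ef r)\<^sup>2 - exp (2 * lg r) * (eg r)\<^sup>2\<bar> \<le> CC * d \<and>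
   \<bar>exp (2 * lf r) - exp (2 * lg r)\<bar> \<le> CC * d"
proof -
  have m: "t * d \<le> CC * d" if "t \<le> CC" for t using that d0 by (rule mult_right_mono)
  have 1: "\<bar>lf r\<bar> \<le> CC" using lam_b[OF r] CC_ge(1) by simp
  have 2: "\<bar>ef r\<bar> \<le> CC" using ef_bd[OF r] CC_ge(2) by simp
  have 3: "\<bar>exp (lf r) - exp (lg r)\<bar> \<le> CC * d" using dexpl[OF r] m[OF CC_ge(3)] by (simp add: mult.assoc)
  have 4: "\<bar>exp (lf r) * ef r - exp (lg r) * eg r\<bar> \<le> CC * d" using dX[OF r] m[OF CC_ge(4)] by simp
  have 5: "\<bar>ef r - eg r\<bar> \<le> CC * d" using de[OF r] m[OF CC_ge(5)] by simp
  have 6: "\<bar>lf r - lg r\<bar> \<le> CC * d" using dlam[OF r] m[OF CC_ge(6)] by simp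
  have 7: "\<bar>exp (2 * lf r) * (ef r)\<^sup>2 - exp (2 * lg r) * (eg r)\<^sup>2\<bar> \<le> CC * d" using dX2[OF r] m[OF CC_ge(7)] by simp
  have 8: "\<bar>exp (2 * lf r) - exp (2 * lg r)\<bar> \<le> CC * d" using dexp2[OF r] m[OF CC_ge(8)] by simp
  show ?thesis using 1 2 3 4 5 6 7 8 by blast
qed

end

theorem proposition3p1:
  fixes q r0 u0 Lam :: real
    and g :: "vec3 \<Rightarrow> vec3 \<Rightarrow> real" and lam_g e_g :: "real \<Rightarrow> real"
  assumes "r0 > 0" "u0 > 0" "Lam > 0"
    and "(g, lam_g, e_g) \<in> D q r0 u0 Lam"
  shows "\<exists>\<epsilon>>0. \<exists>C>0. \<forall>f lam_f e_f.
     (f, lam_f, e_f) \<in> D q r0 u0 Lam \<and> sup_dist f g < \<epsilon> \<longrightarrow>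
     (\<forall>r\<ge>0.
        \<bar>lam_f r\<bar> \<le> C \<and> \<bar>e_f r\<bar> \<le> C \<and>
        \<bar>exp (lam_f r) - exp (lam_g r)\<bar> \<le> C * sup_dist f g \<and>
        \<bar>exp (lam_f r) * e_f r - exp (lam_g r) * e_g r\<bar> \<le> C * sup_dist f g \<and>
        \<bar>e_f r - e_g r\<bar> \<le> C * sup_dist f g \<and>
        \<bar>lam_f r - lam_g r\<bar> \<le> C * sup_dist f g \<and>
        \<bar>exp (2 * lam_f r) * (e_f r)\<^sup>2 - exp (2 * lam_g r) * (e_g r)\<^sup>2\<bar> \<le> C * sup_dist f g \<and>
        \<bar>exp (2 * lam_f r) - exp (2 * lam_g r)\<bar> \<le> C * sup_dist f g)"
proof -
  interpret G: sol q r0 u0 Lam g lam_g e_g by unfold_locales (rule assms(4))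
  obtain Bg where Bg0: "Bg \<ge> 0" and Bg: "\<And>x v. \<bar>g x v\<bar> \<le> Bg" using G.bounded by blast
  interpret gsol q r0 u0 Lam g lam_g e_g Bg
    by unfold_locales (use assms Bg in auto)
  have CC0: "CC > 0"
  proof -
    have "0 \<le> exp Lam * Kl" "0 \<le> BE * Kl" "0 \<le> BE * Kb" "0 \<le> kap * Kl"
      using Kl0 BE0 Kb0 kap0 by auto
    thus ?thesis using Lam BE0 Kb0 Kl0 unfolding CC_def by linarith
  qed
  have main: "\<forall>f lam_f e_f.
     (f, lam_f, e_f) \<in> D q r0 u0 Lam \<and> sup_dist f g < 1 \<longrightarrow>
     (\<forall>r\<ge>(0::real).
        \<bar>lam_f r\<bar> \<le> CC \<and> \<bar>e_f r\<bar> \<le> CC \<and>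
        \<bar>exp (lam_f r) - exp (lam_g r)\<bar> \<le> CC * sup_dist f g \<and>
        \<bar>exp (lam_f r) * e_f r - exp (lam_g r) * e_g r\<bar> \<le> CC * sup_dist f g \<and>
        \<bar>e_f r - e_g r\<bar> \<le> CC * sup_dist f g \<and>
        \<bar>lam_f r - lam_g r\<bar> \<le> CC * sup_dist f g \<and>
        \<bar>exp (2 * lam_f r) * (e_f r)\<^sup>2 - exp (2 * lam_g r) * (e_g r)\<^sup>2\<bar> \<le> CC * sup_dist f g \<and>
        \<bar>exp (2 * lam_f r) - exp (2 * lam_g r)\<bar> \<le> CC * sup_dist f g)"
  proof (intro allI impI)
    fix f lam_f e_f and r :: real
    assume H: "(f, lam_f, e_f) \<in> D q r0 u0 Lam \<and> sup_dist f g < 1" and r: "0 \<le> r"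
    interpret F: sol q r0 u0 Lam f lam_f e_f by unfold_locales (use H in blast)
    obtain Bf where Bf: "\<And>x v. \<bar>f x v\<bar> \<le> Bf" using F.bounded by blast
    have bdd: "bdd_above ((\<lambda>p. \<bar>f (fst p) (snd p) - g (fst p) (snd p)\<bar>) ` UNIV)"
    proof (rule bdd_aboveI2)
      fix p :: "vec3 \<times> vec3"
      show "\<bar>f (fst p) (snd p) - g (fst p) (snd p)\<bar> \<le> Bf + Bg"
        using Bf[of "fst p" "snd p"] Bg[of "fst p" "snd p"] by linarith
    qed
    have dist: "\<bar>f x v - g x v\<bar> \<le> sup_dist f g" for x v
      unfolding sup_dist_def using cSUP_upper[OF UNIV_I bdd, of "(x, v)"] by simp
    interpret P: pair q r0 u0 Lam g lam_g e_g Bg f lam_f e_f "sup_dist f g"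
      by unfold_locales (use dist H in auto)
    show "\<bar>lam_f r\<bar> \<le> CC \<and> \<bar>e_f r\<bar> \<le> CC \<and>
        \<bar>exp (lam_f r) - exp (lam_g r)\<bar> \<le> CC * sup_dist f g \<and>
        \<bar>exp (lam_f r) * e_f r - exp (lam_g r) * e_g r\<bar> \<le> CC * sup_dist f g \<and>
        \<bar>e_f r - e_g r\<bar> \<le> CC * sup_dist f g \<and>
        \<bar>lam_f r - lam_g r\<bar> \<le> CC * sup_dist f g \<and>
        \<bar>exp (2 * lam_f r) * (e_f r)\<^sup>2 - exp (2 * lam_g r) * (e_g r)\<^sup>2\<bar> \<le> CC * sup_dist f g \<and>
        \<bar>exp (2 * lam_f r) - exp (2 * lam_g r)\<bar> \<le> CC * sup_dist f g"
      by (rule P.final[OF r])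
  qed
  show ?thesis
    apply (rule exI[of _ "1::real"])
    apply (rule conjI, simp)
    apply (rule exI[of _ CC])
    using CC0 main by blast
qed


end
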